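(* Let $n, M \ge 2$ be integers and let $W_1, \dots, W_M \in \mathbb{R}^{n \times n}$ be weighted adjacency matrices (nonnegative entries) of a time-evolving graph on the fixed vertex set $\{v_1, \dots, v_n\}$, such that every row of each $W_t$ has positive sum. Let $S_t = D_t^{-1} W_t$, where $D_t = \mathrm{diag}\big(\sum_j (W_t)_{1j}, \dots, \sum_j (W_t)_{nj}\big)$. Let $\boldsymbol{\mu}_1 = \frac{1}{n}\mathbb{1}$ and $\boldsymbol{\mu}_{t+1} = S_t^\top \boldsymbol{\mu}_t$ for $t = 1, \dots, M-1$; assume all entries of $\boldsymbol{\mu}_t$ are strictly positive for all $t \in \{1,\dots,M\}$, and let $D_{\mu_t} = \mathrm{diag}(\boldsymbol{\mu}_t)$. Define $K_t = S_t$ and $T_t = D_{\mu_{t+1}}^{-1} S_t^\top D_{\mu_t}$ for $t = 1, \dots, M-1$, and let $\mathbf{C} \in \mathbb{R}^{nM \times nM}$ be the block matrix with $n\times n$ blocks $\mathbf{C}_{[s,r]}$ given by: $\mathbf{C}_{[1,2]} = K_1$; for $2 \le t \le M-1$, $\mathbf{C}_{[t,t-1]} = \tfrac12 T_{t-1}$ and $\mathbf{C}_{[t,t+1]} = \tfrac12 K_t$; $\mathbf{C}_{[M,M-1]} = T_{M-1}$; all other blocks zero. Let $\mathbf{L} = I - \mathbf{C}$ (the spatio-temporal graph Laplacian). Then all eigenvalues of $\mathbf{L}$ are real and contained in $[0, 2]$, and the spectrum of $\mathbf{L}$ is symmetric about $1$, i.e., if $\nu$ is an eigenvalue of $\mathbf{L}$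 then so is $2 - \nu$.
   Context: $I$ denotes the $nM \times nM$ identity matrix. *)

theory Defs
  imports "Jordan_Normal_Form.Char_Poly"
begin

text \<open>Time-indexed data: W t for t = 1..M, each an n x n real matrix (vertices indexed 0..n-1).\<close>

definition row_sum :: "real mat \<Rightarrow> nat \<Rightarrow> real" where
  "row_sum A i = (\<Sum>j<dim_col A. A $$ (i,j))"

definition diag_of_vec :: "real vec \<Rightarrow> real mat" where
  "diag_of_vec v = mat (dim_vec v) (dim_vec v) (\<lambda>(i,j). if i = j then v $ i else 0)"

definition degree_mat :: "nat \<Rightarrow> (nat \<Rightarrow> real mat) \<Rightarrow> nat \<Rightarrow> real mat" where
  "degree_mat n W t = diag_of_vec (vec n (\<lambda>i. row_sum (W t) i))"

definition S_mat :: "nat \<Rightarrow> (nat \<Rightarrow> real mat) \<Rightarrow> nat \<Rightarrow> real mat" where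
  "S_mat n W t = diag_of_vec (vec n (\<lambda>i. 1 / row_sum (W t) i)) * W t"

text \<open>mu_aux k = mu_{k+1}: mu_1 = (1/n) 1, mu_{t+1} = S_t^T mu_t\<close>
primrec mu_aux :: "nat \<Rightarrow> (nat \<Rightarrow> real mat) \<Rightarrow> nat \<Rightarrow> real vec" where
  "mu_aux n W 0 = vec n (\<lambda>_. 1 / real n)"
| "mu_aux n W (Suc k) = transpose_mat (S_mat n W (Suc k)) *\<^sub>v mu_aux n W k"

definition mu :: "nat \<Rightarrow> (nat \<Rightarrow> real mat) \<Rightarrow> nat \<Rightarrow> real vec" where
  "mu n W t = mu_aux n W (t - 1)"

definition K_mat :: "nat \<Rightarrow> (nat \<Rightarrow> real mat) \<Rightarrow> nat \<Rightarrow> real mat" where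
  "K_mat n W t = S_mat n W t"

definition T_mat :: "nat \<Rightarrow> (nat \<Rightarrow> real mat) \<Rightarrow> nat \<Rightarrow> real mat" where
  "T_mat n W t = diag_of_vec (map_vec (\<lambda>x. 1 / x) (mu n W (t+1))) * transpose_mat (S_mat n W t)
                 * diag_of_vec (mu n W t)"

definition C_block :: "nat \<Rightarrow> nat \<Rightarrow> (nat \<Rightarrow> real mat) \<Rightarrow> nat \<Rightarrow> nat \<Rightarrow> real mat" where
  "C_block n M W s r =
     (if s = 1 \<and> r = 2 then K_mat n W 1
      else if 2 \<le> s \<and> s \<le> M - 1 \<and> r = s - 1 then (1/2) \<cdot>\<^sub>m T_mat n W (s - 1)
      else if 2 \<le> s \<and> s \<le> M - 1 \<and> r = s + 1 then (1/2) \<cdot>\<^sub>m K_mat n W s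
      else if s = M \<and> r = M - 1 then T_mat n W (M - 1)
      else 0\<^sub>m n n)"

definition C_mat :: "nat \<Rightarrow> nat \<Rightarrow> (nat \<Rightarrow> real mat) \<Rightarrow> real mat" where
  "C_mat n M W = mat (n*M) (n*M)
     (\<lambda>(p,q). C_block n M W (p div n + 1) (q div n + 1) $$ (p mod n, q mod n))"

definition L_mat :: "nat \<Rightarrow> nat \<Rightarrow> (nat \<Rightarrow> real mat) \<Rightarrow> real mat" where
  "L_mat n M W = 1\<^sub>m (n*M) - C_mat n M W"

end

theory Submission
  imports Defs
begin

lemma abstract_spec:
  fixes c :: "nat \<Rightarrow> nat \<Rightarrow> real" and \<pi> :: "nat \<Rightarrow> real" and N n :: nat
    and A :: "complex mat"
  assumes nonneg: "\<And>p q. p < N \<Longrightarrow> q < N \<Longrightarrow> c p q \<ge> 0"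
    and rowsum: "\<And>p. p < N \<Longrightarrow> (\<Sum>q<N. c p q) = 1"
    and pos: "\<And>p. p < N \<Longrightarrow> \<pi> p > 0"
    and db: "\<And>p q. p < N \<Longrightarrow> q < N \<Longrightarrow> \<pi> p * c p q = \<pi> q * c q p"
    and bip: "\<And>p q. p < N \<Longrightarrow> q < N \<Longrightarrow> c p q \<noteq> 0 \<Longrightarrow> odd (p div n + q div n)"
    and Acar: "A \<in> carrier_mat N N"
    and Aent: "\<And>p q. p < N \<Longrightarrow> q < N \<Longrightarrow> A $$ (p,q) = complex_of_real ((if p = q then 1 else 0) - c p q)"
    and ev: "eigenvalue A \<nu>"
  shows "Im \<nu> = 0 \<and> 0 \<le> Re \<nu> \<and> Re \<nu> \<le> 2 \<and> eigenvalue A (2 - \<nu>)"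
proof -
  obtain v where v: "v \<in> carrier_vec N" "v \<noteq> 0\<^sub>v N" "A *\<^sub>v v = \<nu> \<cdot>\<^sub>v v"
    using ev Acar unfolding eigenvalue_def eigenvector_def by auto
  define l where "l = 1 - \<nu>"
  have mv: "(A *\<^sub>v x) $ p = x $ p - (\<Sum>q<N. complex_of_real (c p q) * x $ q)"
    if "p < N" "x \<in> carrier_vec N" for p x
  proof -
    have "(A *\<^sub>v x) $ p = (\<Sum>q\<in>{0..<N}. A $$ (p,q) * x $ q)"
      using that Acar by (auto simp: scalar_prod_def)
    also have "\<dots> = (\<Sum>q<N. (if p = q then x $ q else 0) - complex_of_real (c p q) * x $ q)"
      by (rule sum.cong) (auto simp: Aent that left_diff_distrib)
    also have "\<dots> = x $ p - (\<Sum>q<N. complex_of_real (c p q) * x $ q)"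
      using that by (simp add: sum_subtractf)
    finally show ?thesis .
  qed
  have eq: "(\<Sum>q<N. complex_of_real (c p q) * v $ q) = l * v $ p" if "p < N" for p
  proof -
    have "(A *\<^sub>v v) $ p = \<nu> * v $ p" using v that by simp
    then show ?thesis using mv[OF that v(1)] unfolding l_def by (simp add: algebra_simps)
  qed
  obtain p1 where p1: "p1 < N" "v $ p1 \<noteq> 0"
    using v(1,2) by (metis carrier_vecD eq_vecI index_zero_vec(1) index_zero_vec(2))
  define Q where "Q = (\<Sum>p<N. \<Sum>q<N. complex_of_real (\<pi> p * c p q) * (cnj (v $ p) * v $ q))"
  define R where "R = (\<Sum>p<N. \<pi> p * (cmod (v $ p))^2)"
  have Rpos: "R > 0"
    unfolding R_def
  proof (rule sum_pos2[where i=p1])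
    show "0 < \<pi> p1 * (cmod (v $ p1))\<^sup>2" using pos p1 by simp
  next
    fix i assume "i \<in> {..<N}"
    then have "\<pi> i > 0" using pos by simp
    then show "0 \<le> \<pi> i * (cmod (v $ i))\<^sup>2" by simp
  qed (use p1 in auto)
  have "Q = (\<Sum>p<N. complex_of_real (\<pi> p) * cnj (v $ p) * (\<Sum>q<N. complex_of_real (c p q) * v $ q))"
    unfolding Q_def by (simp add: sum_distrib_left mult_ac)
  also have "\<dots> = (\<Sum>p<N. l * (complex_of_real (\<pi> p) * (cnj (v $ p) * v $ p)))"
    by (rule sum.cong) (simp_all add: eq)
  also have "\<dots> = l * complex_of_real R"
    unfolding R_def of_real_sum sum_distrib_left
    by (intro sum.cong refl) (simp only: of_real_mult complex_norm_square; simp add: mult_ac)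
  finally have Q1: "Q = l * complex_of_real R" .
  have "cnj Q = (\<Sum>p<N. \<Sum>q<N. complex_of_real (\<pi> p * c p q) * (cnj (v $ q) * v $ p))"
    unfolding Q_def by (simp add: mult_ac)
  also have "\<dots> = (\<Sum>q<N. \<Sum>p<N. complex_of_real (\<pi> p * c p q) * (cnj (v $ q) * v $ p))"
    by (rule sum.swap)
  also have "\<dots> = Q"
    unfolding Q_def by (intro sum.cong refl) (simp add: db)
  finally have "cnj Q = Q" .
  then have "cnj l * complex_of_real R = l * complex_of_real R" using Q1 by simp
  then have "cnj l = l" using Rpos by simp
  then have Iml: "Im l = 0" by (metis cnj.simps(2) neg_equal_zero)
  define m where "m = Max ((\<lambda>q. cmod (v $ q)) ` {..<N})"
  have Nne: "{..<N} \<noteq> {}" using p1 by auto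
  have mge: "cmod (v $ q) \<le> m" if "q < N" for q
    unfolding m_def using that by (intro Max_ge) auto
  obtain p0 where p0: "p0 < N" "m = cmod (v $ p0)"
  proof -
    have "m \<in> (\<lambda>q. cmod (v $ q)) ` {..<N}"
      unfolding m_def using Nne by (intro Max_in) auto
    then show ?thesis using that by auto
  qed
  have mpos: "m > 0" using mge[OF p1(1)] p1 by (smt (verit) zero_less_norm_iff)
  have "cmod l * m = cmod (\<Sum>q<N. complex_of_real (c p0 q) * v $ q)"
    using eq[OF p0(1)] p0 by (simp add: norm_mult)
  also have "\<dots> \<le> (\<Sum>q<N. cmod (complex_of_real (c p0 q) * v $ q))"
    by (rule norm_sum)
  also have "\<dots> \<le> (\<Sum>q<N. c p0 q * m)"
    by (rule sum_mono) (use nonneg p0 mge in \<open>auto simp: norm_mult intro!: mult_left_mono\<close>)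
  also have "\<dots> = m" using rowsum[OF p0(1)] by (simp add: sum_distrib_right[symmetric])
  finally have "cmod l \<le> 1" using mpos by simp
  then have "\<bar>Re l\<bar> \<le> 1" using Iml by (simp add: cmod_def)
  then have part1: "Im \<nu> = 0 \<and> 0 \<le> Re \<nu> \<and> Re \<nu> \<le> 2"
    using Iml unfolding l_def by auto
  define w where "w = vec N (\<lambda>p. (-1)^(p div n) * v $ p)"
  have wcar: "w \<in> carrier_vec N" unfolding w_def by simp
  have sgn: "complex_of_real (c p q) * (-1)^(q div n) = - ((-1)^(p div n) * complex_of_real (c p q))"
    if "p < N" "q < N" for p q
  proof (cases "c p q = 0")
    case False
    then have "odd (p div n + q div n)" using bip that by auto
    then show ?thesis
      by (cases "even (p div n)") (auto simp: minus_one_power_iff)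
  qed simp
  have "A *\<^sub>v w = (2 - \<nu>) \<cdot>\<^sub>v w"
  proof (rule eq_vecI)
    fix p assume "p < dim_vec ((2 - \<nu>) \<cdot>\<^sub>v w)"
    then have p: "p < N" using wcar by simp
    have "(\<Sum>q<N. complex_of_real (c p q) * w $ q) = (\<Sum>q<N. - ((-1)^(p div n) * (complex_of_real (c p q) * v $ q)))"
      unfolding w_def by (intro sum.cong refl) (simp add: sgn[OF p] mult.assoc[symmetric])
    also have "\<dots> = - ((-1)^(p div n) * (l * v $ p))"
      by (simp add: sum_negf sum_distrib_left[symmetric] eq p)
    finally have "(A *\<^sub>v w) $ p = w $ p + l * w $ p"
      using mv[OF p wcar] p unfolding w_def by (simp add: mult_ac)
    then show "(A *\<^sub>v w) $ p = ((2 - \<nu>) \<cdot>\<^sub>v w) $ p"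
      using p wcar unfolding l_def by (simp add: algebra_simps)
  qed (use Acar wcar in simp)
  moreover have "w \<noteq> 0\<^sub>v N"
  proof
    assume "w = 0\<^sub>v N"
    then have "w $ p1 = 0" using p1 by simp
    then show False using p1 unfolding w_def by simp
  qed
  ultimately have "eigenvalue A (2 - \<nu>)"
    unfolding eigenvalue_def eigenvector_def using Acar wcar by auto
  with part1 show ?thesis by blast
qed


locale stg =
  fixes n M :: nat and W :: "nat \<Rightarrow> real mat"
  assumes n2: "n \<ge> 2" and M2: "M \<ge> 2"
    and Wcar: "\<And>t. t \<in> {1..M} \<Longrightarrow> W t \<in> carrier_mat n n"
    and Wnn: "\<And>t i j. t \<in> {1..M} \<Longrightarrow> i < n \<Longrightarrow> j < n \<Longrightarrow> W t $$ (i,j) \<ge> 0"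
    and rsp: "\<And>t i. t \<in> {1..M} \<Longrightarrow> i < n \<Longrightarrow> row_sum (W t) i > 0"
    and mup: "\<And>t i. t \<in> {1..M} \<Longrightarrow> i < n \<Longrightarrow> mu n W t $ i > 0"
begin

abbreviation "S t \<equiv> S_mat n W t"
abbreviation "T t \<equiv> T_mat n W t"
abbreviation "m t \<equiv> mu n W t"

lemma diag_entry: "i < dim_vec v \<Longrightarrow> j < dim_vec v \<Longrightarrow> diag_of_vec v $$ (i,j) = (if i = j then v $ i else 0)"
  "dim_row (diag_of_vec v) = dim_vec v" "dim_col (diag_of_vec v) = dim_vec v"
  by (auto simp: diag_of_vec_def)

lemma diag_mult_left: assumes "A \<in> carrier_mat k l" "i < k" "j < l" "dim_vec v = k"
  shows "(diag_of_vec v * A) $$ (i,j) = v $ i * A $$ (i,j)"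
proof -
  have "(diag_of_vec v * A) $$ (i,j) = (\<Sum>x\<in>{0..<k}. (if i = x then v $ i else 0) * A $$ (x,j))"
    using assms by (auto simp: diag_entry scalar_prod_def intro!: sum.cong)
  also have "\<dots> = (\<Sum>x\<in>{0..<k}. (if i = x then v $ i * A $$ (x,j) else 0))"
    by (rule sum.cong) auto
  also have "\<dots> = v $ i * A $$ (i,j)"
    using assms by (simp add: sum.delta)
  finally show ?thesis .
qed

lemma mult_diag_right: assumes "A \<in> carrier_mat k l" "i < k" "j < l" "dim_vec v = l"
  shows "(A * diag_of_vec v) $$ (i,j) = A $$ (i,j) * v $ j"
proof -
  have "(A * diag_of_vec v) $$ (i,j) = (\<Sum>x\<in>{0..<l}. A $$ (i,x) * (if x = j then v $ j else 0))"
    using assms by (auto simp: diag_entry scalar_prod_def intro!: sum.cong)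
  also have "\<dots> = (\<Sum>x\<in>{0..<l}. (if x = j then A $$ (i,x) * v $ j else 0))"
    by (rule sum.cong) auto
  also have "\<dots> = A $$ (i,j) * v $ j"
    using assms by (simp add: sum.delta')
  finally show ?thesis .
qed

lemma S_car: "t \<in> {1..M} \<Longrightarrow> S t \<in> carrier_mat n n"
  using Wcar[of t] by (intro carrier_matI) (auto simp: S_mat_def diag_entry)

lemma S_entry: "t \<in> {1..M} \<Longrightarrow> i < n \<Longrightarrow> j < n \<Longrightarrow> S t $$ (i,j) = W t $$ (i,j) / row_sum (W t) i"
  unfolding S_mat_def by (subst diag_mult_left[OF Wcar]) auto

lemma S_nn: "t \<in> {1..M} \<Longrightarrow> i < n \<Longrightarrow> j < n \<Longrightarrow> S t $$ (i,j) \<ge> 0"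
  using S_entry Wnn rsp by (simp add: less_imp_le)

lemma S_rows: assumes "t \<in> {1..M}" "i < n" shows "(\<Sum>j<n. S t $$ (i,j)) = 1"
proof -
  have rs: "row_sum (W t) i = (\<Sum>j<n. W t $$ (i,j))" using Wcar[OF assms(1)] by (simp add: row_sum_def)
  have "(\<Sum>j<n. S t $$ (i,j)) = (\<Sum>j<n. W t $$ (i,j)) / row_sum (W t) i"
    using assms by (simp add: S_entry sum_divide_distrib)
  then show ?thesis using rs rsp[OF assms] by simp
qed

lemma mu_aux_car: "k < M \<Longrightarrow> mu_aux n W k \<in> carrier_vec n"
proof (induction k)
  case 0 then show ?case by simp
next
  case (Suc k)
  then have "S (Suc k) \<in> carrier_mat n n" using S_car by simp
  then show ?case using Suc by simp
qed

lemma mu_car: "t \<in> {1..M} \<Longrightarrow> m t \<in> carrier_vec n"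
  unfolding mu_def by (rule mu_aux_car) auto

lemma mu_rec: assumes "t \<in> {1..<M}" "i < n"
  shows "m (t+1) $ i = (\<Sum>j<n. S t $$ (j,i) * m t $ j)"
proof -
  have e: "m (t+1) = transpose_mat (S t) *\<^sub>v m t"
    using assms unfolding mu_def by (cases t) auto
  have Sc: "S t \<in> carrier_mat n n" using S_car assms by auto
  have mc: "m t \<in> carrier_vec n" using mu_car assms by auto
  show ?thesis unfolding e using Sc mc assms
    by (auto simp: scalar_prod_def lessThan_atLeast0 intro!: sum.cong)
qed

lemma T_entry: assumes "t \<in> {1..<M}" "i < n" "j < n"
  shows "T t $$ (i,j) = S t $$ (j,i) * m t $ j / m (t+1) $ i"
proof -
  have Sc: "S t \<in> carrier_mat n n" using S_car assms by auto
  have mc: "m t \<in> carrier_vec n" "m (t+1) \<in> carrier_vec n" using mu_car assms by auto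
  have c1: "diag_of_vec (map_vec (\<lambda>x. 1 / x) (m (t+1))) * transpose_mat (S t) \<in> carrier_mat n n"
    using Sc mc by (auto simp: diag_entry)
  have "T t $$ (i,j) = (diag_of_vec (map_vec (\<lambda>x. 1 / x) (m (t+1))) * transpose_mat (S t)) $$ (i,j) * m t $ j"
    unfolding T_mat_def using c1 mc assms by (subst mult_diag_right) auto
  also have "\<dots> = (1 / m (t+1) $ i) * S t $$ (j,i) * m t $ j"
    using Sc mc assms by (subst diag_mult_left[where k=n and l=n]) auto
  finally show ?thesis by simp
qed

lemma T_nn: assumes "t \<in> {1..<M}" "i < n" "j < n" shows "T t $$ (i,j) \<ge> 0"
proof -
  have "S t $$ (j,i) \<ge> 0" "m t $ j > 0" "m (t+1) $ i > 0"
    using S_nn mup assms by auto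
  then show ?thesis using T_entry[OF assms] by simp
qed

lemma T_rows: assumes "t \<in> {1..<M}" "i < n" shows "(\<Sum>j<n. T t $$ (i,j)) = 1"
proof -
  have "(\<Sum>j<n. T t $$ (i,j)) = (\<Sum>j<n. S t $$ (j,i) * m t $ j) / m (t+1) $ i"
    using assms by (simp add: T_entry sum_divide_distrib)
  also have "\<dots> = 1" using mu_rec[OF assms] mup[of "t+1" i] assms by simp
  finally show ?thesis .
qed

lemma T_car: "t \<in> {1..<M} \<Longrightarrow> T t \<in> carrier_mat n n"
  using S_car[of t] mu_car[of t] mu_car[of "t+1"]
  by (intro carrier_matI) (auto simp: T_mat_def diag_entry)

definition wt :: "nat \<Rightarrow> real" where "wt s = (if s = 1 \<or> s = M then 1 else 2)"

lemma n0: "n > 0" using n2 by simp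

lemma C_entry: assumes "p < n*M" "q < n*M"
  shows "C_mat n M W $$ (p,q) =
    (if q div n = p div n + 1 then S (p div n + 1) $$ (p mod n, q mod n) / wt (p div n + 1)
     else if p div n = q div n + 1 then T (q div n + 1) $$ (p mod n, q mod n) / wt (p div n + 1)
     else 0)"
proof -
  define s where "s = p div n + 1"
  define r where "r = q div n + 1"
  define i where "i = p mod n"
  define j where "j = q mod n"
  have sM: "1 \<le> s" "s \<le> M" using assms n0 unfolding s_def
    by (auto simp: less_mult_imp_div_less mult.commute Suc_le_eq)
  have rM: "1 \<le> r" "r \<le> M" using assms n0 unfolding r_def
    by (auto simp: less_mult_imp_div_less mult.commute Suc_le_eq)
  have ij: "i < n" "j < n" using n0 unfolding i_def j_def by auto
  have e: "C_mat n M W $$ (p,q) = C_block n M W s r $$ (i,j)"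
    using assms unfolding C_mat_def s_def r_def i_def j_def by simp
  have Sc: "\<And>t. t \<in> {1..M} \<Longrightarrow> dim_row (S t) = n \<and> dim_col (S t) = n" using S_car by auto
  have Tc: "\<And>t. t \<in> {1..<M} \<Longrightarrow> dim_row (T t) = n \<and> dim_col (T t) = n" using T_car by auto
  have blk: "C_block n M W s r $$ (i,j) =
      (if r = s + 1 then S s $$ (i,j) / wt s else if s = r + 1 then T r $$ (i,j) / wt s else 0)"
  proof -
    consider "r = s + 1" | "s = r + 1" | "r \<noteq> s + 1" "s \<noteq> r + 1" by blast
    then show ?thesis
    proof cases
      case 1
      then show ?thesis using sM rM ij Sc[of s]
        by (auto simp: C_block_def K_mat_def wt_def)
    next
      case 2
      then show ?thesis using sM rM ij Tc[of r]
        by (auto simp: C_block_def K_mat_def wt_def)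
    next
      case 3
      then show ?thesis using sM rM ij
        by (auto simp: C_block_def K_mat_def wt_def)
    qed
  qed
  show ?thesis using e blk unfolding s_def r_def i_def j_def by simp
qed

lemma block_sum: "(\<Sum>q<n*M. if q div n = b then g (q mod n) else 0) = (if b < M then (\<Sum>j<n. g j) else (0::real))"
proof (cases "b < M")
  case True
  have "(\<Sum>q<n*M. if q div n = b then g (q mod n) else 0) = (\<Sum>q\<in>{q\<in>{..<n*M}. q div n = b}. g (q mod n))"
    by (rule sum.inter_filter[symmetric]) simp
  also have "{q\<in>{..<n*M}. q div n = b} = (\<lambda>j. b*n + j) ` {..<n}"
  proof (rule Set.set_eqI, rule iffI)
    fix q assume "q \<in> {q\<in>{..<n*M}. q div n = b}"
    then have "q = b*n + q mod n" "q mod n < n" using n0 by (auto simp: mult.commute)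
    then show "q \<in> (\<lambda>j. b*n + j) ` {..<n}" by (metis imageI lessThan_iff)
  next
    fix q assume "q \<in> (\<lambda>j. b*n + j) ` {..<n}"
    then obtain j where j: "j < n" "q = b*n + j" by auto
    have "b*n + j < b*n + n" using j by simp
    also have "\<dots> = (b+1)*n" by simp
    also have "\<dots> \<le> M*n" using True by (intro mult_right_mono) auto
    finally show "q \<in> {q\<in>{..<n*M}. q div n = b}" using j n0 by (auto simp: mult.commute)
  qed
  also have "(\<Sum>q\<in>(\<lambda>j. b*n + j) ` {..<n}. g (q mod n)) = (\<Sum>j<n. g ((b*n + j) mod n))"
    by (subst sum.reindex) (auto simp: inj_on_def)
  also have "\<dots> = (\<Sum>j<n. g j)" by (intro sum.cong refl) simp
  finally show ?thesis using True by simp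
next
  case False
  have "q div n \<noteq> b" if "q < n*M" for q
    using that False n0 by (metis less_mult_imp_div_less mult.commute)
  then show ?thesis using False by (intro trans[OF sum.neutral]) auto
qed

definition c :: "nat \<Rightarrow> nat \<Rightarrow> real" where "c p q = C_mat n M W $$ (p,q)"
definition pp :: "nat \<Rightarrow> real" where "pp p = wt (p div n + 1) * m (p div n + 1) $ (p mod n)"

lemma wt_pos: "wt s > 0" by (simp add: wt_def)

lemma blk_le: "p < n*M \<Longrightarrow> p div n < M" using n0 by (metis less_mult_imp_div_less mult.commute)

lemma c_nn: assumes "p < n*M" "q < n*M" shows "c p q \<ge> 0"
proof -
  have "p div n < M" "q div n < M" using blk_le assms by auto
  moreover have "p mod n < n" "q mod n < n" using n0 by auto
  ultimately show ?thesis unfolding c_def C_entry[OF assms]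
    using S_nn T_nn wt_pos by (auto intro!: divide_nonneg_pos)
qed

lemma pp_pos: "p < n*M \<Longrightarrow> pp p > 0"
  unfolding pp_def using blk_le[of p] n0 wt_pos mup by auto

lemma c_bip: assumes "p < n*M" "q < n*M" "c p q \<noteq> 0" shows "odd (p div n + q div n)"
  using assms unfolding c_def C_entry[OF assms(1,2)] by (auto split: if_splits)

lemma c_rows: assumes "p < n*M" shows "(\<Sum>q<n*M. c p q) = 1"
proof -
  define s where "s = p div n + 1"
  define i where "i = p mod n"
  have sM: "s \<le> M" using blk_le[OF assms] unfolding s_def by simp
  have i: "i < n" using n0 unfolding i_def by simp
  have ce: "c p q = (if q div n = s then S s $$ (i, q mod n) / wt s else 0)
       + (if q div n + 1 = p div n then T (p div n) $$ (i, q mod n) / wt s else 0)" if "q < n*M" for q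
    unfolding c_def C_entry[OF assms that] s_def i_def by auto
  have "(\<Sum>q<n*M. c p q) = (\<Sum>q<n*M. if q div n = s then S s $$ (i, q mod n) / wt s else 0)
       + (\<Sum>q<n*M. if q div n + 1 = p div n then T (p div n) $$ (i, q mod n) / wt s else 0)"
    by (simp add: ce sum.distrib)
  also have "(\<Sum>q<n*M. if q div n = s then S s $$ (i, q mod n) / wt s else 0)
     = (if s < M then 1 / wt s else 0)"
  proof -
    have s1: "s \<in> {1..M}" using sM unfolding s_def by simp
    have "(\<Sum>j<n. S s $$ (i, j) / wt s) = 1 / wt s"
      using S_rows[OF s1 i] by (simp add: sum_divide_distrib[symmetric])
    then show ?thesis using block_sum[of s "\<lambda>j. S s $$ (i,j) / wt s"] by simp
  qed
  also have "(\<Sum>q<n*M. if q div n + 1 = p div n then T (p div n) $$ (i, q mod n) / wt s else 0)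
     = (if p div n \<ge> 1 then 1 / wt s else 0)"
  proof (cases "p div n = 0")
    case True then show ?thesis by simp
  next
    case False
    then have "(\<Sum>q<n*M. if q div n + 1 = p div n then T (p div n) $$ (i, q mod n) / wt s else 0)
      = (\<Sum>q<n*M. if q div n = p div n - 1 then T (p div n) $$ (i, q mod n) / wt s else 0)"
      by (intro sum.cong refl) auto
    also have "\<dots> = (\<Sum>j<n. T (p div n) $$ (i, j) / wt s)"
      using block_sum[of "p div n - 1" "\<lambda>j. T (p div n) $$ (i, j) / wt s"] sM False unfolding s_def by simp
    also have "\<dots> = (\<Sum>j<n. T (p div n) $$ (i, j)) / wt s"
      by (simp add: sum_divide_distrib[symmetric])
    also have "\<dots> = 1 / wt s" using T_rows[of "p div n" i] False sM i unfolding s_def by simp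
    finally show ?thesis using False by simp
  qed
  finally show ?thesis unfolding s_def wt_def using sM[unfolded s_def] M2 by auto
qed

lemma flow: assumes "p < n*M" "q < n*M" "q div n = p div n + 1"
  shows "pp p * c p q = S (p div n + 1) $$ (p mod n, q mod n) * m (p div n + 1) $ (p mod n)"
    and "pp q * c q p = S (p div n + 1) $$ (p mod n, q mod n) * m (p div n + 1) $ (p mod n)"
proof -
  define s where "s = p div n + 1"
  have sM: "s < M" using blk_le[OF assms(2)] assms(3) unfolding s_def by simp
  have i: "p mod n < n" "q mod n < n" using n0 by auto
  show "pp p * c p q = S (p div n + 1) $$ (p mod n, q mod n) * m (p div n + 1) $ (p mod n)"
    unfolding pp_def c_def C_entry[OF assms(1,2)] using assms(3) wt_pos[of "p div n + 1"] by simp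
  have "pp q * c q p = m (s+1) $ (q mod n) * T s $$ (q mod n, p mod n)"
    unfolding pp_def c_def C_entry[OF assms(2,1)] using assms(3) wt_pos[of "s+1"] unfolding s_def by simp
  also have "\<dots> = S s $$ (p mod n, q mod n) * m s $ (p mod n)"
    using T_entry[of s "q mod n" "p mod n"] sM i mup[of "s+1" "q mod n"] unfolding s_def by auto
  finally show "pp q * c q p = S (p div n + 1) $$ (p mod n, q mod n) * m (p div n + 1) $ (p mod n)"
    unfolding s_def .
qed

lemma c_db: assumes "p < n*M" "q < n*M" shows "pp p * c p q = pp q * c q p"
proof -
  consider "q div n = p div n + 1" | "p div n = q div n + 1" | "q div n \<noteq> p div n + 1" "p div n \<noteq> q div n + 1"
    by blast
  then show ?thesis
  proof cases
    case 1 then show ?thesis using flow[OF assms] by simp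
  next
    case 2 then show ?thesis using flow[OF assms(2,1)] by simp
  next
    case 3 then show ?thesis unfolding c_def C_entry[OF assms] C_entry[OF assms(2,1)] by auto
  qed
qed

theorem main:
  "\<forall>\<nu>. eigenvalue (map_mat complex_of_real (L_mat n M W)) \<nu> \<longrightarrow>
           Im \<nu> = 0 \<and> 0 \<le> Re \<nu> \<and> Re \<nu> \<le> 2 \<and>
           eigenvalue (map_mat complex_of_real (L_mat n M W)) (2 - \<nu>)"
proof (intro allI impI)
  fix \<nu> assume ev: "eigenvalue (map_mat complex_of_real (L_mat n M W)) \<nu>"
  show "Im \<nu> = 0 \<and> 0 \<le> Re \<nu> \<and> Re \<nu> \<le> 2 \<and>
           eigenvalue (map_mat complex_of_real (L_mat n M W)) (2 - \<nu>)"
  proof (rule abstract_spec[where c = c and \<pi> = pp and N = "n*M" and n = n])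
    show "map_mat complex_of_real (L_mat n M W) \<in> carrier_mat (n*M) (n*M)"
      by (simp add: L_mat_def C_mat_def carrier_matI)
    show "map_mat complex_of_real (L_mat n M W) $$ (p, q) =
          complex_of_real ((if p = q then 1 else 0) - c p q)" if "p < n*M" "q < n*M" for p q
      using that by (simp add: L_mat_def C_mat_def c_def)
  qed (use ev c_nn c_rows pp_pos c_db c_bip in auto)
qed

end

theorem corollary1:
  fixes n M :: nat and W :: "nat \<Rightarrow> real mat"
  assumes "n \<ge> 2" and "M \<ge> 2"
    and "\<And>t. t \<in> {1..M} \<Longrightarrow> W t \<in> carrier_mat n n"
    and "\<And>t i j. t \<in> {1..M} \<Longrightarrow> i < n \<Longrightarrow> j < n \<Longrightarrow> W t $$ (i,j) \<ge> 0"
    and "\<And>t i. t \<in> {1..M} \<Longrightarrow> i < n \<Longrightarrow> row_sum (W t) i > 0"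
    and "\<And>t i. t \<in> {1..M} \<Longrightarrow> i < n \<Longrightarrow> mu n W t $ i > 0"
  shows "\<forall>\<nu>. eigenvalue (map_mat complex_of_real (L_mat n M W)) \<nu> \<longrightarrow>
           Im \<nu> = 0 \<and> 0 \<le> Re \<nu> \<and> Re \<nu> \<le> 2 \<and>
           eigenvalue (map_mat complex_of_real (L_mat n M W)) (2 - \<nu>)"
proof -
  interpret stg n M W by (unfold_locales; fact assms)
  show ?thesis by (rule main)
qed

end
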